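(* Let $(\mathfrak{g},[\cdot,\cdot]_{\mathfrak{g}})$ be a Leibniz algebra, $(V;\rho^L,\rho^R)$ a representation, $T$ a relative Rota-Baxter operator, and $x\in\mathfrak{g}$ a Nijenhuis element associated to $T$. Then $\rho^L(x)$ is a Nijenhuis operator on the Leibniz algebra $(V,[\cdot,\cdot]_T)$, where $[u,v]_T=\rho^L(Tu)v+\rho^R(Tv)u$.
   Context: A Leibniz algebra is a vector space $\mathfrak{g}$ with bilinear $[\cdot,\cdot]_{\mathfrak{g}}$ satisfying $[x,[y,z]_{\mathfrak{g}}]_{\mathfrak{g}}=[[x,y]_{\mathfrak{g}},z]_{\mathfrak{g}}+[y,[x,z]_{\mathfrak{g}}]_{\mathfrak{g}}$. A representation $(V;\rho^L,\rho^R)$: linear $\rho^L,\rho^R:\mathfrak{g}\to\mathfrak{gl}(V)$ with $\rho^L([x,y]_{\mathfrak{g}})=[\rho^L(x),\rho^L(y)]$, $\rho^R([x,y]_{\mathfrak{g}})=[\rho^L(x),\rho^R(y)]$, $\rho^R(y)\rho^L(x)=-\rho^R(y)\rho^R(x)$. A relative Rota-Baxter operator is a linear $T:V\to\mathfrak{g}$ with $[Tv_1,Tv_2]_{\mathfrak{g}}=T(\rho^L(Tv_1)v_2+\rho^R(Tv_2)v_1)$; $(V,[\cdot,\cdot]_T)$ is then a Leibniz algebra. An element $x\in\mathfrak{g}$ is a Nijenhuis element associated to $T$ if for all $y,z\in\mathfrak{g}$, $u\in V$: $[[x,y]_{\mathfrak{g}},[x,z]_{\mathfrak{g}}]_{\mathfrak{g}}=0$,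 $\rho^L([x,y]_{\mathfrak{g}})\rho^L(x)=0$, $\rho^R([x,y]_{\mathfrak{g}})\rho^L(x)=0$, and $[x,T\rho^L(x)u-[x,Tu]_{\mathfrak{g}}]_{\mathfrak{g}}=0$. A Nijenhuis operator on a Leibniz algebra $(A,[\cdot,\cdot])$ is a linear $N:A\to A$ with $[Na,Nb]=N([Na,b]+[a,Nb]-N[a,b])$ for all $a,b\in A$. *)

theory Defs
  imports "HOL-Analysis.Analysis"
begin

definition bilinear_map ::
  "('k::field \<Rightarrow> 'a::ab_group_add \<Rightarrow> 'a) \<Rightarrow> ('k \<Rightarrow> 'b::ab_group_add \<Rightarrow> 'b) \<Rightarrow>
   ('k \<Rightarrow> 'c::ab_group_add \<Rightarrow> 'c) \<Rightarrow> ('a \<Rightarrow> 'b \<Rightarrow> 'c) \<Rightarrow> bool" where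
  "bilinear_map sa sb sc f \<longleftrightarrow>
     (\<forall>x. Vector_Spaces.linear sb sc (f x)) \<and> (\<forall>y. Vector_Spaces.linear sa sc (\<lambda>x. f x y))"

definition leibniz_algebra ::
  "('k::field \<Rightarrow> 'g::ab_group_add \<Rightarrow> 'g) \<Rightarrow> ('g \<Rightarrow> 'g \<Rightarrow> 'g) \<Rightarrow> bool" where
  "leibniz_algebra sg br \<longleftrightarrow>
     Vector_Spaces.vector_space sg \<and> bilinear_map sg sg sg br \<and>
     (\<forall>x y z. br x (br y z) = br (br x y) z + br y (br x z))"

definition comm_op :: "('v \<Rightarrow> 'v::ab_group_add) \<Rightarrow> ('v \<Rightarrow> 'v) \<Rightarrow> 'v \<Rightarrow> 'v" where
  "comm_op A B = (\<lambda>v. A (B v) - B (A v))"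

definition leibniz_rep ::
  "('k::field \<Rightarrow> 'g::ab_group_add \<Rightarrow> 'g) \<Rightarrow> ('g \<Rightarrow> 'g \<Rightarrow> 'g) \<Rightarrow>
   ('k \<Rightarrow> 'v::ab_group_add \<Rightarrow> 'v) \<Rightarrow> ('g \<Rightarrow> 'v \<Rightarrow> 'v) \<Rightarrow> ('g \<Rightarrow> 'v \<Rightarrow> 'v) \<Rightarrow> bool" where
  "leibniz_rep sg br sv rhoL rhoR \<longleftrightarrow>
     Vector_Spaces.vector_space sv \<and>
     bilinear_map sg sv sv rhoL \<and> bilinear_map sg sv sv rhoR \<and>
     (\<forall>x y. rhoL (br x y) = comm_op (rhoL x) (rhoL y)) \<and>
     (\<forall>x y. rhoR (br x y) = comm_op (rhoL x) (rhoR y)) \<and>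
     (\<forall>x y. rhoR y \<circ> rhoL x = (\<lambda>v. - rhoR y (rhoR x v)))"

definition relative_RB ::
  "('k::field \<Rightarrow> 'g::ab_group_add \<Rightarrow> 'g) \<Rightarrow> ('g \<Rightarrow> 'g \<Rightarrow> 'g) \<Rightarrow>
   ('k \<Rightarrow> 'v::ab_group_add \<Rightarrow> 'v) \<Rightarrow> ('g \<Rightarrow> 'v \<Rightarrow> 'v) \<Rightarrow> ('g \<Rightarrow> 'v \<Rightarrow> 'v) \<Rightarrow> ('v \<Rightarrow> 'g) \<Rightarrow> bool" where
  "relative_RB sg br sv rhoL rhoR T \<longleftrightarrow>
     Vector_Spaces.linear sv sg T \<and>
     (\<forall>v1 v2. br (T v1) (T v2) = T (rhoL (T v1) v2 + rhoR (T v2) v1))"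

definition bracket_T ::
  "('g \<Rightarrow> 'v \<Rightarrow> 'v::ab_group_add) \<Rightarrow> ('g \<Rightarrow> 'v \<Rightarrow> 'v) \<Rightarrow> ('v \<Rightarrow> 'g) \<Rightarrow> 'v \<Rightarrow> 'v \<Rightarrow> 'v" where
  "bracket_T rhoL rhoR T u v = rhoL (T u) v + rhoR (T v) u"

definition nijenhuis_element ::
  "('g::ab_group_add \<Rightarrow> 'g \<Rightarrow> 'g) \<Rightarrow> ('g \<Rightarrow> 'v::ab_group_add \<Rightarrow> 'v) \<Rightarrow> ('g \<Rightarrow> 'v \<Rightarrow> 'v) \<Rightarrow>
   ('v \<Rightarrow> 'g) \<Rightarrow> 'g \<Rightarrow> bool" where
  "nijenhuis_element br rhoL rhoR T x \<longleftrightarrow>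
     (\<forall>y z. br (br x y) (br x z) = 0) \<and>
     (\<forall>y. rhoL (br x y) \<circ> rhoL x = (\<lambda>v. 0)) \<and>
     (\<forall>y. rhoR (br x y) \<circ> rhoL x = (\<lambda>v. 0)) \<and>
     (\<forall>u. br x (T (rhoL x u) - br x (T u)) = 0)"

definition nijenhuis_operator ::
  "('k::field \<Rightarrow> 'a::ab_group_add \<Rightarrow> 'a) \<Rightarrow> ('a \<Rightarrow> 'a \<Rightarrow> 'a) \<Rightarrow> ('a \<Rightarrow> 'a) \<Rightarrow> bool" where
  "nijenhuis_operator s br N \<longleftrightarrow>
     Vector_Spaces.linear s s N \<and>
     (\<forall>a b. br (N a) (N b) = N (br (N a) b + br a (N b) - N (br a b)))"

end

theory Submission
  imports Defs
begin

lemma lin_facts: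
  assumes "Vector_Spaces.linear s1 s2 f"
  shows "f (a + b) = f a + f b" "f 0 = 0" "f (a - b) = f a - f b"
proof -
  have add: "\<And>a b. f (a + b) = f a + f b" using assms by (simp add: Vector_Spaces.linear_iff)
  then show "f (a + b) = f a + f b" .
  have "f 0 = f 0 + f 0" using add[of 0 0] by simp
  then show z: "f 0 = 0" by simp
  have "f (a - b) + f b = f a" using add[of "a - b" b] by simp
  then show "f (a - b) = f a - f b" by (simp add: eq_diff_eq)
qed

theorem proposition3p11:
  fixes sg :: "'k::field \<Rightarrow> 'g::ab_group_add \<Rightarrow> 'g"
    and sv :: "'k \<Rightarrow> 'v::ab_group_add \<Rightarrow> 'v"
    and br :: "'g \<Rightarrow> 'g \<Rightarrow> 'g"
    and rhoL rhoR :: "'g \<Rightarrow> 'v \<Rightarrow> 'v"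
    and T :: "'v \<Rightarrow> 'g"
    and x :: 'g
  assumes "leibniz_algebra sg br"
    and "leibniz_rep sg br sv rhoL rhoR"
    and "relative_RB sg br sv rhoL rhoR T"
    and "nijenhuis_element br rhoL rhoR T x"
  shows "nijenhuis_operator sv (bracket_T rhoL rhoR T) (rhoL x)"
proof -
  have A: "bilinear_map sg sg sg br" using assms(1) unfolding leibniz_algebra_def by blast
  have R: "bilinear_map sg sv sv rhoL" "bilinear_map sg sv sv rhoR"
    "\<And>a b. rhoL (br a b) = comm_op (rhoL a) (rhoL b)"
    "\<And>a b. rhoR (br a b) = comm_op (rhoL a) (rhoR b)"
    "\<And>a b. rhoR b \<circ> rhoL a = (\<lambda>v. - rhoR b (rhoR a v))"
    using assms(2) unfolding leibniz_rep_def by blast+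
  have N: "\<And>y. rhoL (br x y) \<circ> rhoL x = (\<lambda>v. 0)"
    "\<And>y. rhoR (br x y) \<circ> rhoL x = (\<lambda>v. 0)"
    "\<And>u. br x (T (rhoL x u) - br x (T u)) = 0"
    using assms(4) unfolding nijenhuis_element_def by blast+
  have linbr: "Vector_Spaces.linear sg sg (br c)" for c using A unfolding bilinear_map_def by blast
  have linL: "Vector_Spaces.linear sv sv (rhoL c)" for c using R(1) unfolding bilinear_map_def by blast
  have linR: "Vector_Spaces.linear sv sv (rhoR c)" for c using R(2) unfolding bilinear_map_def by blast
  have linL1: "Vector_Spaces.linear sg sv (\<lambda>c. rhoL c v)" for v using R(1) unfolding bilinear_map_def by blast
  have linR1: "Vector_Spaces.linear sg sv (\<lambda>c. rhoR c v)" for v using R(2) unfolding bilinear_map_def by blast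
  have Ladd: "rhoL c (p + q) = rhoL c p + rhoL c q" "rhoL c (p - q) = rhoL c p - rhoL c q" for c p q
    using lin_facts[OF linL] by blast+
  have Radd: "rhoR c (p + q) = rhoR c p + rhoR c q" "rhoR c (p - q) = rhoR c p - rhoR c q" for c p q
    using lin_facts[OF linR] by blast+
  have L1: "rhoL (a - b) v = rhoL a v - rhoL b v" "rhoL 0 v = 0" for a b v
    using lin_facts[OF linL1[of v]] by simp_all
  have R1: "rhoR (a - b) v = rhoR a v - rhoR b v" "rhoR 0 v = 0" for a b v
    using lin_facts[OF linR1[of v]] by simp_all
  have brd: "br c (p - q) = br c p - br c q" for c p q using lin_facts[OF linbr] by blast
  have cL: "rhoL (br a b) w = rhoL a (rhoL b w) - rhoL b (rhoL a w)" for a b w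
    using R(3) unfolding comm_op_def by simp
  have cR: "rhoR (br a b) w = rhoL a (rhoR b w) - rhoR b (rhoL a w)" for a b w
    using R(4) unfolding comm_op_def by simp
  have nL: "rhoL (br x y) (rhoL x w) = 0" for y w using fun_cong[OF N(1)] by simp
  have nR: "rhoR (br x y) (rhoL x w) = 0" for y w using fun_cong[OF N(2)] by simp
  let ?L = "rhoL x"
  have main: "bracket_T rhoL rhoR T (?L u) (?L v) =
     ?L (bracket_T rhoL rhoR T (?L u) v + bracket_T rhoL rhoR T u (?L v) - ?L (bracket_T rhoL rhoR T u v))"
    for u v
  proof -
    define a where "a = T u"
    define b where "b = T v"
    have E1: "?L (rhoL (T (?L u)) v) = rhoL (br x (T (?L u))) v + rhoL (T (?L u)) (?L v)"
      using cL[of x "T (?L u)" v] by simp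
    have E2: "?L (rhoL a (?L v)) - ?L (?L (rhoL a v)) = - rhoL (br x (br x a)) v"
    proof -
      have "?L (rhoL (br x a) v) = rhoL (br x (br x a)) v + rhoL (br x a) (?L v)"
        using cL[of x "br x a" v] by simp
      also have "rhoL (br x a) (?L v) = 0" by (rule nL)
      finally have e: "?L (rhoL (br x a) v) = rhoL (br x (br x a)) v" by simp
      have "?L (rhoL (br x a) v) = ?L (?L (rhoL a v)) - ?L (rhoL a (?L v))"
        using cL[of x a v] Ladd by simp
      with e show ?thesis by (simp add: algebra_simps)
    qed
    have E3: "rhoL (br x (T (?L u))) v - rhoL (br x (br x a)) v = 0"
      using N(3)[of u] brd L1 a_def by metis
    have F1: "?L (rhoR (T (?L v)) u) = rhoR (br x (T (?L v))) u + rhoR (T (?L v)) (?L u)"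
      using cR[of x "T (?L v)" u] by simp
    have F2: "?L (rhoR b (?L u)) - ?L (?L (rhoR b u)) = - rhoR (br x (br x b)) u"
    proof -
      have "?L (rhoR (br x b) u) = rhoR (br x (br x b)) u + rhoR (br x b) (?L u)"
        using cR[of x "br x b" u] by simp
      also have "rhoR (br x b) (?L u) = 0" by (rule nR)
      finally have e: "?L (rhoR (br x b) u) = rhoR (br x (br x b)) u" by simp
      have "?L (rhoR (br x b) u) = ?L (?L (rhoR b u)) - ?L (rhoR b (?L u))"
        using cR[of x b u] Ladd by simp
      with e show ?thesis by (simp add: algebra_simps)
    qed
    have F3: "rhoR (br x (T (?L v))) u - rhoR (br x (br x b)) u = 0"
      using N(3)[of v] brd R1 b_def by metis
    show ?thesis
    proof -
      have E2': "?L (?L (rhoL a v)) = ?L (rhoL a (?L v)) + rhoL (br x (br x a)) v"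
        using E2 by (simp add: algebra_simps)
      have F2': "?L (?L (rhoR b u)) = ?L (rhoR b (?L u)) + rhoR (br x (br x b)) u"
        using F2 by (simp add: algebra_simps)
      show ?thesis unfolding bracket_T_def Ladd a_def[symmetric] b_def[symmetric] using E1 E3 F1 F3 by (simp add: E2' F2' algebra_simps)
    qed
  qed
  show ?thesis unfolding nijenhuis_operator_def using linL main by blast
qed

end
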